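(* In the setting below, let $\sigma,\tau>0$ satisfy $\sigma\tau\|A\|^2+\tau L\le1$ and let $(x^{(k)},z^{(k)})$ be generated either by the Bregman primal Condat--V\~u algorithm \[x^{(k+1)}=\mathrm{prox}^{\phi_{\mathrm p}}_{\tau f}\big(x^{(k)},\tau A^Tz^{(k)}+\tau\nabla h(x^{(k)})\big),\quad z^{(k+1)}=\mathrm{prox}^{\phi_{\mathrm d}}_{\sigma g^*}\big(z^{(k)},-\sigma A(2x^{(k+1)}-x^{(k)})\big),\] or by the Bregman dual Condat--V\~u algorithm \[z^{(k+1)}=\mathrm{prox}^{\phi_{\mathrm d}}_{\sigma g^*}\big(z^{(k)},-\sigma Ax^{(k)}\big),\quad x^{(k+1)}=\mathrm{prox}^{\phi_{\mathrm p}}_{\tau f}\big(x^{(k)},\tau A^T(2z^{(k+1)}-z^{(k)})+\tau\nabla h(x^{(k)})\big),\] starting from $x^{(0)}\in\operatorname{int}(\operatorname{dom}\phi_{\mathrm p})\cap\operatorname{dom} h$, $z^{(0)}\in\operatorname{int}(\operatorname{dom}\phi_{\mathrm d})$. Let $x^{(k)}_{\mathrm{avg}}=\frac1k\sum_{i=1}^kx^{(i)}$, $z^{(k)}_{\mathrm{avg}}=\frac1k\sum_{i=1}^kz^{(i)}$ for $k\ge1$. Then for all $k\ge1$, all $x\in\operatorname{dom} f\cap\operatorname{dom}\phi_{\mathrm p}$ and all $z\in\operatorname{dom} g^*\cap\operatorname{dom}\phi_{\mathrm d}$, \[\mathcal L(x^{(k)}_{\mathrm{avg}},z)-\mathcal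 L(x,z^{(k)}_{\mathrm{avg}})\le\frac2k\Big(\frac1\tau d_{\mathrm p}(x,x^{(0)})+\frac1\sigma d_{\mathrm d}(z,z^{(0)})\Big).\]
   Context: Setting: $f:\mathbb R^n\to\mathbb R\cup\{+\infty\}$, $g:\mathbb R^m\to\mathbb R\cup\{+\infty\}$, $h$ are closed convex functions, $h$ differentiable on its open convex domain, $f+h$ and $g$ proper, $A\in\mathbb R^{m\times n}$; $g^*$ is the conjugate of $g$. Lagrangian: $\mathcal L(x,z)=f(x)+h(x)+\langle z,Ax\rangle-g^*(z)$ (value $+\infty$ if $x\notin\operatorname{dom}(f+h)$, $-\infty$ if $x\in\operatorname{dom}(f+h)$, $z\notin\operatorname{dom}g^*$). A Bregman kernel $\phi$ is convex with $\operatorname{int}(\operatorname{dom}\phi)\neq\emptyset$, continuous on $\operatorname{dom}\phi$, continuously differentiable on $\operatorname{int}(\operatorname{dom}\phi)$; its distance is $d(x,y)=\phi(x)-\phi(y)-\langle\nabla\phi(y),x-y\rangle$ on $\operatorname{dom}\phi\times\operatorname{int}(\operatorname{dom}\phi)$, and $\mathrm{prox}^\phi_F(y,a)=\operatorname{argmin}_x\big(F(x)+\langle a,x\rangle+d(x,y)\big)$, assumed for every $a$ and $y\in\operatorname{int}(\operatorname{dom}\phi)$ to be a unique point of $\operatorname{int}(\operatorname{dom}\phi)$. Kernels $\phi_{\mathrm p}$ on $\mathbb R^n$, $\phi_{\mathrm d}$ on $\mathbb R^m$ have distances $d_{\mathrm p},d_{\mathrm d}$ with $d_{\mathrm p}(x,x')\ge\frac12\|x-x'\|_{\mathrm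 p}^2$, $d_{\mathrm d}(z,z')\ge\frac12\|z-z'\|_{\mathrm d}^2$ for norms $\|\cdot\|_{\mathrm p},\|\cdot\|_{\mathrm d}$. Also $\operatorname{dom}\phi_{\mathrm p}\subseteq\operatorname{dom}h$ and $h(x)-h(x')-\langle\nabla h(x'),x-x'\rangle\le L\,d_{\mathrm p}(x,x')$ for all $(x,x')\in\operatorname{dom}d_{\mathrm p}$, for some $L>0$. $\|A\|=\sup_{u\ne0,v\ne0}\langle v,Au\rangle/(\|v\|_{\mathrm d}\|u\|_{\mathrm p})$. The optimality conditions $0\in\partial f(x)+\nabla h(x)+A^Tz$, $0\in\partial g^*(z)-Ax$ have a solution $(x^\star,z^\star)\in\operatorname{dom}\phi_{\mathrm p}\times\operatorname{dom}\phi_{\mathrm d}$. *)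

theory Defs
  imports "HOL-Analysis.Analysis"
begin

definition edom :: "('a \<Rightarrow> ereal) \<Rightarrow> 'a set" where
  "edom F = {x. F x < \<infinity>}"

definition proper_fun :: "('a \<Rightarrow> ereal) \<Rightarrow> bool" where
  "proper_fun F \<longleftrightarrow> (\<forall>x. F x \<noteq> -\<infinity>) \<and> edom F \<noteq> {}"

definition convex_fun :: "('a::real_vector \<Rightarrow> ereal) \<Rightarrow> bool" where
  "convex_fun F \<longleftrightarrow> convex {(x, r::real). F x \<le> ereal r}"

definition closed_fun :: "('a::topological_space \<Rightarrow> ereal) \<Rightarrow> bool" where
  "closed_fun F \<longleftrightarrow> closed {(x, r::real). F x \<le> ereal r}"

definition conjugate :: "('a::real_inner \<Rightarrow> ereal) \<Rightarrow> 'a \<Rightarrow> ereal" where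
  "conjugate g z = (SUP y. ereal (z \<bullet> y) - g y)"

definition subdiff :: "('a::real_inner \<Rightarrow> ereal) \<Rightarrow> 'a \<Rightarrow> 'a set" where
  "subdiff F x = {s. F x < \<infinity> \<and> (\<forall>y. F x + ereal (s \<bullet> (y - x)) \<le> F y)}"

definition bregman_kernel :: "('a::euclidean_space \<Rightarrow> ereal) \<Rightarrow> ('a \<Rightarrow> 'a) \<Rightarrow> bool" where
  "bregman_kernel phi gphi \<longleftrightarrow>
     convex_fun phi \<and> (\<forall>x. phi x \<noteq> -\<infinity>) \<and> interior (edom phi) \<noteq> {} \<and>
     continuous_on (edom phi) phi \<and>
     (\<forall>x\<in>interior (edom phi).
        ((\<lambda>y. real_of_ereal (phi y)) has_derivative (\<lambda>v. gphi x \<bullet> v)) (at x)) \<and>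
     continuous_on (interior (edom phi)) gphi"

text \<open>Bregman distance d(x,y), meaningful for x in dom phi, y in int dom phi.\<close>
definition bdist :: "('a::real_inner \<Rightarrow> ereal) \<Rightarrow> ('a \<Rightarrow> 'a) \<Rightarrow> 'a \<Rightarrow> 'a \<Rightarrow> real" where
  "bdist phi gphi x y = real_of_ereal (phi x) - real_of_ereal (phi y) - gphi y \<bullet> (x - y)"

definition prox_obj :: "('a::real_inner \<Rightarrow> ereal) \<Rightarrow> ('a \<Rightarrow> ereal) \<Rightarrow> ('a \<Rightarrow> 'a) \<Rightarrow> 'a \<Rightarrow> 'a \<Rightarrow> 'a \<Rightarrow> ereal" where
  "prox_obj F phi gphi y a x =
     (if x \<in> edom phi then F x + ereal (a \<bullet> x + bdist phi gphi x y) else \<infinity>)"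

definition prox_argmin :: "('a::real_inner \<Rightarrow> ereal) \<Rightarrow> ('a \<Rightarrow> ereal) \<Rightarrow> ('a \<Rightarrow> 'a) \<Rightarrow> 'a \<Rightarrow> 'a \<Rightarrow> 'a set" where
  "prox_argmin F phi gphi y a = {x. \<forall>x'. prox_obj F phi gphi y a x \<le> prox_obj F phi gphi y a x'}"

definition bprox :: "('a::real_inner \<Rightarrow> ereal) \<Rightarrow> ('a \<Rightarrow> ereal) \<Rightarrow> ('a \<Rightarrow> 'a) \<Rightarrow> 'a \<Rightarrow> 'a \<Rightarrow> 'a" where
  "bprox F phi gphi y a = (THE p. p \<in> prox_argmin F phi gphi y a)"

definition prox_wellposed :: "('a::real_inner \<Rightarrow> ereal) \<Rightarrow> ('a \<Rightarrow> ereal) \<Rightarrow> ('a \<Rightarrow> 'a) \<Rightarrow> bool" where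
  "prox_wellposed F phi gphi \<longleftrightarrow>
     (\<forall>a. \<forall>y\<in>interior (edom phi). \<exists>p\<in>interior (edom phi). prox_argmin F phi gphi y a = {p})"

definition is_norm :: "('a::real_vector \<Rightarrow> real) \<Rightarrow> bool" where
  "is_norm N \<longleftrightarrow> (\<forall>x y. N (x + y) \<le> N x + N y) \<and> (\<forall>c x. N (c *\<^sub>R x) = \<bar>c\<bar> * N x)
                 \<and> (\<forall>x. N x = 0 \<longleftrightarrow> x = 0)"

definition op_norm :: "(real^'n \<Rightarrow> real) \<Rightarrow> (real^'m \<Rightarrow> real) \<Rightarrow> real^'n^'m \<Rightarrow> real" where
  "op_norm np nd A = Sup {(v \<bullet> (A *v u)) / (nd v * np u) | u v. u \<noteq> 0 \<and> v \<noteq> 0}"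

definition lagrangian :: "(real^'n \<Rightarrow> ereal) \<Rightarrow> (real^'n \<Rightarrow> ereal) \<Rightarrow> (real^'m \<Rightarrow> ereal)
     \<Rightarrow> real^'n^'m \<Rightarrow> real^'n \<Rightarrow> real^'m \<Rightarrow> ereal" where
  "lagrangian f h g A x z =
     (if x \<notin> edom (\<lambda>y. f y + h y) then \<infinity>
      else if z \<notin> edom (conjugate g) then -\<infinity>
      else f x + h x + ereal (z \<bullet> (A *v x)) - conjugate g z)"

end

theory Submission imports Defs begin

lemma deriv_lb:
  fixes q :: "real \<Rightarrow> real"
  assumes d: "(q has_real_derivative D) (at 0)" and dl: "\<delta> > 0"
    and le: "\<And>t. 0 < t \<Longrightarrow> t < \<delta> \<Longrightarrow> C * t \<le> q t - q 0"
  shows "C \<le> D"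
proof -
  have "((\<lambda>y. (q y - q 0) / (y - 0)) \<longlongrightarrow> D) (at 0 within {0<..})"
    using d has_field_derivative_iff has_field_derivative_at_within by blast
  moreover have "\<forall>\<^sub>F y in at_right 0. C \<le> (q y - q 0) / (y - 0)"
  proof -
    have "\<forall>\<^sub>F y in at_right 0. y \<in> {0<..<\<delta>}" using eventually_at_right_real dl by blast
    then show ?thesis
      by eventually_elim (use le in \<open>auto simp: pos_le_divide_eq\<close>)
  qed
  ultimately show ?thesis
    using tendsto_lowerbound[of _ D "at_right 0"] trivial_limit_at_right_real by blast
qed

lemma conv2:
  fixes F :: "'a::real_vector \<Rightarrow> ereal"
  assumes "convex_fun F" "F p \<le> ereal a" "F u \<le> ereal b" "0 \<le> t" "t \<le> 1"
  shows "F ((1 - t) *\<^sub>R p + t *\<^sub>R u) \<le> ereal ((1 - t) * a + t * b)"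
proof -
  have c: "convex {(x, r::real). F x \<le> ereal r}" using assms(1) unfolding convex_fun_def .
  have "(1 - t) *\<^sub>R (p, a) + t *\<^sub>R (u, b) \<in> {(x, r::real). F x \<le> ereal r}"
    using assms by (intro convexD[OF c]) auto
  then show ?thesis by simp
qed

lemma jensen_fun:
  fixes F :: "'a::real_vector \<Rightarrow> ereal"
  assumes "convex_fun F" "finite I" "sum w I = 1" "\<And>i. i \<in> I \<Longrightarrow> 0 \<le> w i"
    "\<And>i. i \<in> I \<Longrightarrow> F (y i) \<le> ereal (c i)"
  shows "F (\<Sum>i\<in>I. w i *\<^sub>R y i) \<le> ereal (\<Sum>i\<in>I. w i * c i)"
proof -
  have cv: "convex {(x, r::real). F x \<le> ereal r}" using assms(1) unfolding convex_fun_def .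
  have "(\<Sum>i\<in>I. w i *\<^sub>R (y i, c i)) \<in> {(x, r::real). F x \<le> ereal r}"
    using assms by (intro convex_sum[OF assms(2) cv]) auto
  moreover have "(\<Sum>i\<in>I. w i *\<^sub>R (y i, c i)) = ((\<Sum>i\<in>I. w i *\<^sub>R y i), (\<Sum>i\<in>I. w i * c i))"
    by (simp add: prod_eq_iff fst_sum snd_sum)
  ultimately show ?thesis by simp
qed


lemma three_point:
  fixes f :: "'a::euclidean_space \<Rightarrow> ereal"
  assumes kern: "bregman_kernel phi gphi" and cpos: "c > 0" and fconv: "convex_fun f"
    and p_int: "p \<in> interior (edom phi)"
    and pmin: "p \<in> prox_argmin (\<lambda>x. ereal c * f x) phi gphi y a"
    and u_dom: "u \<in> edom phi" and fu: "f u = ereal fu" and fp: "f p = ereal fp"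
  shows "c * fp + a \<bullet> p + bdist phi gphi p y + bdist phi gphi u p
         \<le> c * fu + a \<bullet> u + bdist phi gphi u y"
proof -
  define v where "v = u - p"
  define pr where "pr = (\<lambda>x. real_of_ereal (phi x))"
  have dphi: "(pr has_derivative (\<lambda>w. gphi p \<bullet> w)) (at p)"
    using kern p_int unfolding bregman_kernel_def pr_def by blast
  obtain e where e: "e > 0" "ball p e \<subseteq> edom phi"
    using p_int mem_interior by blast
  define \<delta> where "\<delta> = (if v = 0 then 1 else min 1 (e / norm v))"
  have dpos: "\<delta> > 0" using e by (auto simp: \<delta>_def)
  define q where "q = (\<lambda>t. pr (p + t *\<^sub>R v) + t * ((a - gphi y) \<bullet> v))"
  have dq: "(q has_real_derivative (gphi p \<bullet> v + (a - gphi y) \<bullet> v)) (at 0)"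
  proof -
    have 1: "((\<lambda>t::real. p + t *\<^sub>R v) has_derivative (\<lambda>t. t *\<^sub>R v)) (at 0)"
      by (auto intro!: derivative_eq_intros)
    have 2: "(pr has_derivative (\<lambda>w. gphi p \<bullet> w)) (at (p + 0 *\<^sub>R v))" using dphi by simp
    have "((\<lambda>t. pr (p + t *\<^sub>R v)) has_derivative (\<lambda>t. gphi p \<bullet> (t *\<^sub>R v))) (at 0)"
      using diff_chain_at[OF 1 2] by (simp add: o_def)
    then have "((\<lambda>t. pr (p + t *\<^sub>R v)) has_real_derivative (gphi p \<bullet> v)) (at 0)"
      unfolding has_field_derivative_def by (rule has_derivative_eq_rhs) (auto simp: mult.commute)
    then show ?thesis unfolding q_def
      by (auto intro!: derivative_eq_intros)
  qed
  have key: "c * (fp - fu) * t \<le> q t - q 0" if t: "0 < t" "t < \<delta>" for t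
  proof -
    have t1: "t < 1" using t by (auto simp: \<delta>_def split: if_splits)
    have pt_dom: "p + t *\<^sub>R v \<in> edom phi"
    proof (cases "v = 0")
      case True then show ?thesis using e by auto
    next
      case False
      then have "t * norm v < e" using t by (auto simp: \<delta>_def pos_less_divide_eq)
      then have "p + t *\<^sub>R v \<in> ball p e" using t by (simp add: dist_norm)
      then show ?thesis using e by auto
    qed
    have "p \<in> edom phi" using p_int interior_subset by blast
    have eq: "p + t *\<^sub>R v = (1 - t) *\<^sub>R p + t *\<^sub>R u" by (simp add: v_def algebra_simps)
    have fc: "f (p + t *\<^sub>R v) \<le> ereal ((1 - t) * fp + t * fu)"
      unfolding eq using conv2[OF fconv, of p fp u fu t] fu fp t t1 by simp
    have "prox_obj (\<lambda>x. ereal c * f x) phi gphi y a p \<le> prox_obj (\<lambda>x. ereal c * f x) phi gphi y a (p + t *\<^sub>R v)"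
      using pmin unfolding prox_argmin_def by blast
    then have "ereal (c * fp) + ereal (a \<bullet> p + bdist phi gphi p y) \<le>
          ereal c * f (p + t *\<^sub>R v) + ereal (a \<bullet> (p + t *\<^sub>R v) + bdist phi gphi (p + t *\<^sub>R v) y)"
      using pt_dom \<open>p \<in> edom phi\<close> fp unfolding prox_obj_def by simp
    also have "\<dots> \<le> ereal c * ereal ((1 - t) * fp + t * fu) + ereal (a \<bullet> (p + t *\<^sub>R v) + bdist phi gphi (p + t *\<^sub>R v) y)"
      using fc cpos by (intro add_right_mono ereal_mult_left_mono) auto
    finally have "c * fp + (a \<bullet> p + bdist phi gphi p y) \<le> c * ((1 - t) * fp + t * fu) + (a \<bullet> (p + t *\<^sub>R v) + bdist phi gphi (p + t *\<^sub>R v) y)"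
      by simp
    then show ?thesis
      unfolding q_def bdist_def pr_def by (simp add: algebra_simps inner_simps)
  qed
  have "c * (fp - fu) \<le> gphi p \<bullet> v + (a - gphi y) \<bullet> v"
    using deriv_lb[OF dq dpos key] by blast
  then show ?thesis unfolding bdist_def v_def by (simp add: algebra_simps inner_simps)
qed


lemma prox_fin:
  assumes "p \<in> prox_argmin (\<lambda>x. ereal c * f x) phi gphi y a" "p \<in> edom phi" "u \<in> edom phi"
    "f u < \<infinity>" "c > 0"
  shows "f p < \<infinity>"
proof -
  have "prox_obj (\<lambda>x. ereal c * f x) phi gphi y a p \<le> prox_obj (\<lambda>x. ereal c * f x) phi gphi y a u"
    using assms(1) unfolding prox_argmin_def by blast
  also have "\<dots> < \<infinity>" using assms(3,4,5) unfolding prox_obj_def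
    by (cases "f u") (auto simp: ereal_mult_less_right)
  finally have "ereal c * f p < \<infinity>" using assms(2) unfolding prox_obj_def by auto
  then show ?thesis using assms(5) by (cases "f p") auto
qed

lemma bprox_prop:
  assumes "prox_wellposed F phi gphi" "y \<in> interior (edom phi)"
  shows "bprox F phi gphi y a \<in> interior (edom phi) \<and> bprox F phi gphi y a \<in> prox_argmin F phi gphi y a"
proof -
  obtain p where p: "p \<in> interior (edom phi)" "prox_argmin F phi gphi y a = {p}"
    using assms unfolding prox_wellposed_def by blast
  then have "bprox F phi gphi y a = p" unfolding bprox_def by auto
  then show ?thesis using p by auto
qed

lemma deriv_ub:
  fixes q :: "real \<Rightarrow> real"
  assumes d: "(q has_real_derivative D) (at 0)" and dl: "\<delta> > 0"
    and le: "\<And>t. 0 < t \<Longrightarrow> t < \<delta> \<Longrightarrow> q t - q 0 \<le> C * t"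
  shows "D \<le> C"
proof -
  have "(- C) \<le> - D"
    by (rule deriv_lb[of "\<lambda>t. - q t" "- D" \<delta>]) (use d dl in \<open>auto intro!: derivative_eq_intros\<close>, use le in force)
  then show ?thesis by simp
qed

lemma grad_ineq:
  fixes h :: "'a::real_inner \<Rightarrow> ereal"
  assumes hc: "convex_fun h" and hfin: "\<And>w. w \<in> edom h \<Longrightarrow> h w \<noteq> -\<infinity>"
    and dh: "((\<lambda>w. real_of_ereal (h w)) has_derivative (\<lambda>v. g \<bullet> v)) (at y)"
    and hy: "h y = ereal hy" and hu: "h u = ereal hu"
  shows "g \<bullet> (u - y) \<le> hu - hy"
proof -
  define v where "v = u - y"
  define hr where "hr = (\<lambda>w. real_of_ereal (h w))"
  define q where "q = (\<lambda>t. hr (y + t *\<^sub>R v))"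
  have dq: "(q has_real_derivative (g \<bullet> v)) (at 0)"
  proof -
    have 1: "((\<lambda>t::real. y + t *\<^sub>R v) has_derivative (\<lambda>t. t *\<^sub>R v)) (at 0)"
      by (auto intro!: derivative_eq_intros)
    have 2: "(hr has_derivative (\<lambda>w. g \<bullet> w)) (at (y + 0 *\<^sub>R v))" using dh by (simp add: hr_def)
    have "(q has_derivative (\<lambda>t. g \<bullet> (t *\<^sub>R v))) (at 0)"
      using diff_chain_at[OF 1 2] by (simp add: o_def q_def)
    then show ?thesis
      unfolding has_field_derivative_def by (rule has_derivative_eq_rhs) (auto simp: mult.commute)
  qed
  have "q t - q 0 \<le> (hu - hy) * t" if t: "0 < t" "t < 1" for t
  proof -
    have eq: "y + t *\<^sub>R v = (1 - t) *\<^sub>R y + t *\<^sub>R u" by (simp add: v_def algebra_simps)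
    have fc: "h (y + t *\<^sub>R v) \<le> ereal ((1 - t) * hy + t * hu)"
      unfolding eq using conv2[OF hc, of y hy u hu t] hu hy t by simp
    have "h (y + t *\<^sub>R v) < \<infinity>" by (rule le_less_trans[OF fc]) simp
    then have "y + t *\<^sub>R v \<in> edom h" unfolding edom_def by blast
    then have "h (y + t *\<^sub>R v) \<noteq> -\<infinity>" using hfin by blast
    then have "q t \<le> (1 - t) * hy + t * hu" using fc unfolding q_def hr_def
      by (cases "h (y + t *\<^sub>R v)") auto
    then show ?thesis using hy by (simp add: q_def hr_def algebra_simps)
  qed
  then have "g \<bullet> v \<le> hu - hy" using deriv_ub[OF dq, of 1] by auto
  then show ?thesis by (simp add: v_def)
qed


lemma conj_convex:
  fixes g :: "'a::real_inner \<Rightarrow> ereal"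
  assumes "\<And>y. g y \<noteq> -\<infinity>"
  shows "convex_fun (conjugate g)"
  unfolding convex_fun_def
proof (rule convexI, clarsimp)
  fix x r x' r' :: 'a and rr rr' u v :: real
  assume h: "conjugate g x \<le> ereal rr" "conjugate g x' \<le> ereal rr'" "0 \<le> u" "0 \<le> v" "u + v = 1"
  show "conjugate g (u *\<^sub>R x + v *\<^sub>R x') \<le> ereal (u * rr + v * rr')"
    unfolding conjugate_def
  proof (rule SUP_least)
    fix y
    show "ereal ((u *\<^sub>R x + v *\<^sub>R x') \<bullet> y) - g y \<le> ereal (u * rr + v * rr')"
    proof (cases "g y")
      case (real gy)
      have "ereal (x \<bullet> y) - g y \<le> conjugate g x" unfolding conjugate_def by (rule SUP_upper) auto
      then have "ereal (x \<bullet> y - gy) \<le> ereal rr" using h(1) real by (metis ereal_minus(1) order_trans)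
      then have a: "x \<bullet> y - gy \<le> rr" by simp
      have "ereal (x' \<bullet> y) - g y \<le> conjugate g x'" unfolding conjugate_def by (rule SUP_upper) auto
      then have "ereal (x' \<bullet> y - gy) \<le> ereal rr'" using h(2) real by (metis ereal_minus(1) order_trans)
      then have b: "x' \<bullet> y - gy \<le> rr'" by simp
      have "u * (x \<bullet> y - gy) + v * (x' \<bullet> y - gy) \<le> u * rr + v * rr'"
        using a b h(3,4) by (intro add_mono mult_left_mono) auto
      moreover have "(u *\<^sub>R x + v *\<^sub>R x') \<bullet> y - gy = u * (x \<bullet> y - gy) + v * (x' \<bullet> y - gy)"
      proof -
        have "u * (x \<bullet> y - gy) + v * (x' \<bullet> y - gy) = u * (x \<bullet> y) + v * (x' \<bullet> y) - (u + v) * gy"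
          by (simp add: algebra_simps)
        then show ?thesis using h(5) by (simp add: inner_simps)
      qed
      ultimately show ?thesis using real by simp
    next
      case PInf then show ?thesis by simp
    next
      case MInf then show ?thesis using assms by blast
    qed
  qed
qed



lemma isn_zero: "is_norm N \<Longrightarrow> N 0 = 0"
  unfolding is_norm_def by blast

lemma isn_neg: "is_norm N \<Longrightarrow> N (- x) = N x"
proof -
  assume n: "is_norm N"
  have "N ((-1) *\<^sub>R x) = \<bar>-1\<bar> * N x" using n unfolding is_norm_def by blast
  then show ?thesis by simp
qed

lemma isn_sym: "is_norm N \<Longrightarrow> N (x - y) = N (y - x)"
  using isn_neg[of N "x - y"] by simp

lemma isn_nonneg: "is_norm N \<Longrightarrow> 0 \<le> N x"
proof -
  assume n: "is_norm N"
  have "N (x + - x) \<le> N x + N (- x)" using n unfolding is_norm_def by blast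
  then show ?thesis using isn_zero[OF n] isn_neg[OF n, of x] by simp
qed

lemma isn_lb:
  fixes N :: "'a::euclidean_space \<Rightarrow> real"
  assumes n: "is_norm N"
  shows "\<exists>m>0. \<forall>u. m * norm u \<le> N u"
proof -
  have cv: "convex_on UNIV N"
  proof (rule convex_onI)
    fix t :: real and x y :: 'a assume t: "t > 0" "t < 1"
    have "N ((1 - t) *\<^sub>R x + t *\<^sub>R y) \<le> N ((1 - t) *\<^sub>R x) + N (t *\<^sub>R y)"
      using n unfolding is_norm_def by blast
    also have "\<dots> = (1 - t) * N x + t * N y"
      using n t unfolding is_norm_def by simp
    finally show "N ((1 - t) *\<^sub>R x + t *\<^sub>R y) \<le> (1 - t) * N x + t * N y" .
  qed simp
  have cont: "continuous_on (sphere 0 1) N"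
    using convex_on_continuous[OF open_UNIV cv] continuous_on_subset by blast
  obtain b :: 'a where b: "b \<in> Basis" using nonempty_Basis by blast
  then have "b \<in> sphere 0 1" by simp
  then obtain x0 where x0: "x0 \<in> sphere 0 1" "\<forall>y\<in>sphere 0 1. N x0 \<le> N y"
    using continuous_attains_inf[OF compact_sphere _ cont] by blast
  have "x0 \<noteq> 0" using x0 by auto
  then have mpos: "N x0 > 0" using isn_nonneg[OF n, of x0] n unfolding is_norm_def
    by (simp add: less_le)
  have "N x0 * norm u \<le> N u" for u
  proof (cases "u = 0")
    case True then show ?thesis by (simp add: isn_zero[OF n])
  next
    case False
    have s: "(1 / norm u) *\<^sub>R u \<in> sphere 0 1" using False by simp
    have "N u = N (norm u *\<^sub>R ((1 / norm u) *\<^sub>R u))" using False by simp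
    also have "\<dots> = norm u * N ((1 / norm u) *\<^sub>R u)" using n unfolding is_norm_def by simp
    moreover have "N x0 \<le> N ((1 / norm u) *\<^sub>R u)" using x0(2) s by blast
    ultimately show ?thesis by (metis mult.commute mult_left_mono norm_ge_zero)
  qed
  then show ?thesis using mpos by blast
qed

lemma opnorm_bound:
  fixes A :: "real^'n^'m"
  assumes np: "is_norm np" and nd: "is_norm nd"
  shows "v \<bullet> (A *v u) \<le> op_norm np nd A * nd v * np u"
proof (cases "u = 0 \<or> v = 0")
  case True then show ?thesis using isn_zero[OF np] isn_zero[OF nd] by auto
next
  case False
  obtain mp where mp: "mp > 0" "\<forall>u. mp * norm u \<le> np u" using isn_lb[OF np] by blast
  obtain md where md: "md > 0" "\<forall>u. md * norm u \<le> nd u" using isn_lb[OF nd] by blast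
  define K where "K = onorm ((*v) A)"
  have K: "K \<ge> 0" unfolding K_def by (simp add: onorm_pos_le)
  let ?S = "{(v \<bullet> (A *v u)) / (nd v * np u) | u v. u \<noteq> 0 \<and> v \<noteq> 0}"
  have bd: "w \<le> K / (md * mp)" if wS: "w \<in> ?S" for w
  proof -
    obtain u v where uv: "w = (v \<bullet> (A *v u)) / (nd v * np u)" "u \<noteq> 0" "v \<noteq> 0" using wS by blast
    have "v \<bullet> (A *v u) \<le> norm v * norm (A *v u)" by (rule norm_cauchy_schwarz)
    also have "\<dots> \<le> norm v * (K * norm u)" unfolding K_def
      by (intro mult_left_mono onorm) auto
    finally have num: "v \<bullet> (A *v u) \<le> K * (norm v * norm u)" by (simp add: algebra_simps)
    have pos: "0 < (md * norm v) * (mp * norm u)" using uv md mp by simp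
    have den: "(md * norm v) * (mp * norm u) \<le> nd v * np u"
      using md mp by (intro mult_mono) (auto intro: order_trans[OF _ md(2)[rule_format]])
    have "w \<le> K * (norm v * norm u) / ((md * norm v) * (mp * norm u))"
      unfolding uv(1) by (rule frac_le) (use num pos den K in auto)
    also have "\<dots> = K / (md * mp)" using uv by (simp add: field_simps)
    finally show ?thesis .
  qed
  have bdd: "bdd_above ?S" unfolding bdd_above_def using bd by blast
  have "(v \<bullet> (A *v u)) / (nd v * np u) \<in> ?S" using False by blast
  then have le: "(v \<bullet> (A *v u)) / (nd v * np u) \<le> op_norm np nd A"
    unfolding op_norm_def by (rule cSup_upper[OF _ bdd])
  have "nd v > 0" "np u > 0" using False md mp
    by (auto intro: less_le_trans[OF _ md(2)[rule_format]] less_le_trans[OF _ mp(2)[rule_format]])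
  then show ?thesis using le by (simp add: pos_divide_le_eq mult.assoc)
qed

lemma amgm_bound:
  fixes M a b s :: real
  assumes "s > 0"
  shows "M * a * b \<le> a\<^sup>2 / (2 * s) + s * M\<^sup>2 * b\<^sup>2 / 2"
proof -
  have "0 \<le> (a - s * M * b)\<^sup>2" by simp
  then have "2 * s * (M * a * b) \<le> a\<^sup>2 + s\<^sup>2 * M\<^sup>2 * b\<^sup>2"
    by (simp add: power2_eq_square algebra_simps)
  then show ?thesis using assms by (simp add: field_simps power2_eq_square)
qed


lemma three_point_scaled:
  fixes f :: "'a::euclidean_space \<Rightarrow> ereal"
  assumes kern: "bregman_kernel phi gphi" and cpos: "c > 0" and fconv: "convex_fun f"
    and p_int: "p \<in> interior (edom phi)"
    and pmin: "p \<in> prox_argmin (\<lambda>x. ereal c * f x) phi gphi y (c *\<^sub>R a')"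
    and u_dom: "u \<in> edom phi" and fu: "f u = ereal fu" and fp: "f p = ereal fp"
  shows "fp + a' \<bullet> p + (bdist phi gphi p y + bdist phi gphi u p) / c
         \<le> fu + a' \<bullet> u + bdist phi gphi u y / c"
proof -
  have "c * fp + (c *\<^sub>R a') \<bullet> p + bdist phi gphi p y + bdist phi gphi u p
         \<le> c * fu + (c *\<^sub>R a') \<bullet> u + bdist phi gphi u y"
    by (rule three_point[OF kern cpos fconv p_int pmin u_dom fu fp])
  then have "c * (fp + a' \<bullet> p + (bdist phi gphi p y + bdist phi gphi u p) / c)
         \<le> c * (fu + a' \<bullet> u + bdist phi gphi u y / c)"
    using cpos by (simp add: algebra_simps add_divide_distrib)
  then show ?thesis using cpos by simp
qed

lemma bil_bound:
  fixes A :: "real^'n^'m"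
  assumes np: "is_norm np" and nd: "is_norm nd" and s: "\<sigma> > 0"
    and c: "\<sigma> * (op_norm np nd A)\<^sup>2 \<le> c"
    and Dd: "Dd \<ge> 1/2 * (nd v)\<^sup>2" and Dp: "Dp \<ge> 1/2 * (np u)\<^sup>2"
  shows "\<bar>v \<bullet> (A *v u)\<bar> \<le> Dd / \<sigma> + c * Dp"
proof -
  define M where "M = op_norm np nd A"
  have 1: "v \<bullet> (A *v u) \<le> M * nd v * np u" unfolding M_def by (rule opnorm_bound[OF np nd])
  have "(- v) \<bullet> (A *v u) \<le> M * nd (- v) * np u" unfolding M_def by (rule opnorm_bound[OF np nd])
  then have 2: "- (v \<bullet> (A *v u)) \<le> M * nd v * np u" using isn_neg[OF nd] by simp
  have 3: "M * nd v * np u \<le> (nd v)\<^sup>2 / (2 * \<sigma>) + \<sigma> * M\<^sup>2 * (np u)\<^sup>2 / 2"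
    by (rule amgm_bound[OF s])
  have 4: "(nd v)\<^sup>2 / (2 * \<sigma>) \<le> Dd / \<sigma>" using Dd s by (simp add: field_simps)
  have "\<sigma> * M\<^sup>2 * (np u)\<^sup>2 / 2 \<le> \<sigma> * M\<^sup>2 * Dp" using Dp s by (simp add: mult_left_mono)
  also have "\<dots> \<le> c * Dp" using c Dp unfolding M_def
    by (intro mult_right_mono) (auto intro: order_trans[OF _ Dp])
  finally show ?thesis using 1 2 3 4 by linarith
qed

lemma swapA: "(A *v y) \<bullet> w = w \<bullet> (A *v (y::real^'n))" for A :: "real^'n^'m"
  by (rule inner_commute)
lemma cross_primal:
  fixes A :: "real^'n^'m"
  shows "(transpose A *v Z0 + G) \<bullet> (x - X) + (- (A *v (2 *\<^sub>R X - X0))) \<bullet> (z - Z) + G \<bullet> (X - x)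
      + z \<bullet> (A *v X) - Z \<bullet> (A *v x)
    = 1 * ((Z - z) \<bullet> (A *v (X - x)) - (Z0 - z) \<bullet> (A *v (X0 - x)) + (Z - Z0) \<bullet> (A *v (X - X0)))"
  by (simp add: inner_simps matrix_vector_mult_diff_distrib matrix_vector_mult_scaleR dot_lmul_matrix swapA algebra_simps)
lemma cross_dual:
  fixes A :: "real^'n^'m"
  shows "(transpose A *v (2 *\<^sub>R Z - Z0) + G) \<bullet> (x - X) + (- (A *v X0)) \<bullet> (z - Z) + G \<bullet> (X - x)
      + z \<bullet> (A *v X) - Z \<bullet> (A *v x)
    = -1 * ((Z - z) \<bullet> (A *v (X - x)) - (Z0 - z) \<bullet> (A *v (X0 - x)) + (Z - Z0) \<bullet> (A *v (X - X0)))"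
  by (simp add: inner_simps matrix_vector_mult_diff_distrib matrix_vector_mult_scaleR dot_lmul_matrix swapA algebra_simps)

theorem mainTheorem4:
  fixes f h :: "real^'n \<Rightarrow> ereal" and g :: "real^'m \<Rightarrow> ereal"
    and A :: "real^'n^'m" and gh :: "real^'n \<Rightarrow> real^'n"
    and phip :: "real^'n \<Rightarrow> ereal" and gphip :: "real^'n \<Rightarrow> real^'n"
    and phid :: "real^'m \<Rightarrow> ereal" and gphid :: "real^'m \<Rightarrow> real^'m"
    and np :: "real^'n \<Rightarrow> real" and nd :: "real^'m \<Rightarrow> real"
    and L \<sigma> \<tau> :: real
    and xs :: "nat \<Rightarrow> real^'n" and zs :: "nat \<Rightarrow> real^'m"
    and k :: nat and x :: "real^'n" and z :: "real^'m"
  assumes f_cc: "closed_fun f" "convex_fun f"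
    and g_cc: "closed_fun g" "convex_fun g"
    and h_cc: "closed_fun h" "convex_fun h"
    and h_open: "open (edom h)"
    and h_diff: "\<forall>y\<in>edom h. h y \<noteq> -\<infinity> \<and>
                   ((\<lambda>u. real_of_ereal (h u)) has_derivative (\<lambda>v. gh y \<bullet> v)) (at y)"
    and fh_proper: "proper_fun (\<lambda>y. f y + h y)"
    and g_proper: "proper_fun g"
    and kp: "bregman_kernel phip gphip" and kd: "bregman_kernel phid gphid"
    and proxp: "prox_wellposed (\<lambda>y. ereal \<tau> * f y) phip gphip"
    and proxd: "prox_wellposed (\<lambda>w. ereal \<sigma> * conjugate g w) phid gphid"
    and norms: "is_norm np" "is_norm nd"
    and sc_p: "\<forall>y\<in>edom phip. \<forall>y'\<in>interior (edom phip).
                 bdist phip gphip y y' \<ge> 1/2 * (np (y - y'))\<^sup>2"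
    and sc_d: "\<forall>w\<in>edom phid. \<forall>w'\<in>interior (edom phid).
                 bdist phid gphid w w' \<ge> 1/2 * (nd (w - w'))\<^sup>2"
    and dom_sub: "edom phip \<subseteq> edom h"
    and L_pos: "L > 0"
    and rel_smooth: "\<forall>y\<in>edom phip. \<forall>y'\<in>interior (edom phip).
          real_of_ereal (h y) - real_of_ereal (h y') - gh y' \<bullet> (y - y') \<le> L * bdist phip gphip y y'"
    and opt: "\<exists>xo\<in>edom phip. \<exists>zo\<in>edom phid.
          (\<exists>s\<in>subdiff f xo. s + gh xo + transpose A *v zo = 0) \<and>
          (\<exists>t\<in>subdiff (conjugate g) zo. t - A *v xo = 0)"
    and pos: "\<sigma> > 0" "\<tau> > 0"
    and step: "\<sigma> * \<tau> * (op_norm np nd A)\<^sup>2 + \<tau> * L \<le> 1"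
    and init: "xs 0 \<in> interior (edom phip) \<inter> edom h" "zs 0 \<in> interior (edom phid)"
    and iter:
      "(\<forall>j. xs (Suc j) = bprox (\<lambda>y. ereal \<tau> * f y) phip gphip (xs j)
                             (\<tau> *\<^sub>R (transpose A *v zs j) + \<tau> *\<^sub>R gh (xs j)) \<and>
            zs (Suc j) = bprox (\<lambda>w. ereal \<sigma> * conjugate g w) phid gphid (zs j)
                             (- (\<sigma> *\<^sub>R (A *v (2 *\<^sub>R xs (Suc j) - xs j)))))
       \<or>
       (\<forall>j. zs (Suc j) = bprox (\<lambda>w. ereal \<sigma> * conjugate g w) phid gphid (zs j)
                             (- (\<sigma> *\<^sub>R (A *v xs j))) \<and>
            xs (Suc j) = bprox (\<lambda>y. ereal \<tau> * f y) phip gphip (xs j)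
                             (\<tau> *\<^sub>R (transpose A *v (2 *\<^sub>R zs (Suc j) - zs j)) + \<tau> *\<^sub>R gh (xs j)))"
    and k1: "k \<ge> 1"
    and x_dom: "x \<in> edom f \<inter> edom phip"
    and z_dom: "z \<in> edom (conjugate g) \<inter> edom phid"
  shows "lagrangian f h g A ((1 / real k) *\<^sub>R (\<Sum>i=1..k. xs i)) z
         - lagrangian f h g A x ((1 / real k) *\<^sub>R (\<Sum>i=1..k. zs i))
         \<le> ereal (2 / real k * (1 / \<tau> * bdist phip gphip x (xs 0)
                                 + 1 / \<sigma> * bdist phid gphid z (zs 0)))"
proof -
  define fr where "fr = (\<lambda>w. real_of_ereal (f w))"
  define hr where "hr = (\<lambda>w. real_of_ereal (h w))"
  define Gr where "Gr = (\<lambda>w. real_of_ereal (conjugate g w))"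
  define dp where "dp = bdist phip gphip"
  define dd where "dd = bdist phid gphid"
  define M where "M = op_norm np nd A"
  have hfin: "\<And>w. w \<in> edom h \<Longrightarrow> h w \<noteq> -\<infinity>" using h_diff by blast
  have hdom: "\<And>w. w \<in> edom phip \<Longrightarrow> h w = ereal (hr w)"
  proof -
    fix w assume "w \<in> edom phip"
    then have "w \<in> edom h" using dom_sub by blast
    then have "h w < \<infinity>" "h w \<noteq> -\<infinity>" using hfin unfolding edom_def by auto
    then show "h w = ereal (hr w)" unfolding hr_def by (cases "h w") auto
  qed
  have fnm: "\<And>w. w \<in> edom phip \<Longrightarrow> f w \<noteq> -\<infinity>"
  proof
    fix w assume w: "w \<in> edom phip" "f w = -\<infinity>"
    have "f w + h w \<noteq> -\<infinity>" using fh_proper unfolding proper_fun_def by blast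
    then show False using w hdom[OF w(1)] by simp
  qed
  obtain y0 where y0: "g y0 < \<infinity>" "g y0 \<noteq> -\<infinity>"
    using g_proper unfolding proper_fun_def edom_def by blast
  have gnm: "\<And>y. g y \<noteq> -\<infinity>" using g_proper unfolding proper_fun_def by blast
  have Gnm: "conjugate g w \<noteq> -\<infinity>" for w
  proof -
    have "ereal (w \<bullet> y0) - g y0 \<le> conjugate g w" unfolding conjugate_def by (rule SUP_upper) auto
    moreover have "ereal (w \<bullet> y0) - g y0 \<noteq> -\<infinity>" using y0 by (cases "g y0") auto
    ultimately show ?thesis by auto
  qed
  have Gconv: "convex_fun (conjugate g)" by (rule conj_convex[OF gnm])
  have fin_f: "\<And>w. f w < \<infinity> \<Longrightarrow> w \<in> edom phip \<Longrightarrow> f w = ereal (fr w)"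
    using fnm unfolding fr_def by (case_tac "f w") auto
  have fin_G: "\<And>w. conjugate g w < \<infinity> \<Longrightarrow> conjugate g w = ereal (Gr w)"
    using Gnm unfolding Gr_def by (case_tac "conjugate g w") auto
  have x_phip: "x \<in> edom phip" and x_f: "f x < \<infinity>" using x_dom unfolding edom_def by auto
  have z_phid: "z \<in> edom phid" and z_G: "conjugate g z < \<infinity>" using z_dom unfolding edom_def by auto
  define cr where "cr = (\<lambda>(axj::real^'n) (azj::real^'m) X X0 Z.
     axj \<bullet> (x - X) + azj \<bullet> (z - Z) + gh X0 \<bullet> (X - x) + z \<bullet> (A *v X) - Z \<bullet> (A *v x))"
  define cq where "cq = (\<lambda>X X0 Z Z0. (Z - z) \<bullet> (A *v (X - x)) - (Z0 - z) \<bullet> (A *v (X0 - x)) + (Z - Z0) \<bullet> (A *v (X - X0)))"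
  have step_ex: "\<exists>ax az s. (s = 1 \<or> s = (-1::real)) \<and> (\<forall>j. xs (Suc j) = bprox (\<lambda>y. ereal \<tau> * f y) phip gphip (xs j) (\<tau> *\<^sub>R ax j)
                  \<and> zs (Suc j) = bprox (\<lambda>w. ereal \<sigma> * conjugate g w) phid gphid (zs j) (\<sigma> *\<^sub>R az j)
                  \<and> cr (ax j) (az j) (xs (Suc j)) (xs j) (zs (Suc j)) = s * cq (xs (Suc j)) (xs j) (zs (Suc j)) (zs j))"
  proof (rule disjE[OF iter])
    assume H: "\<forall>j. xs (Suc j) = bprox (\<lambda>y. ereal \<tau> * f y) phip gphip (xs j)
                             (\<tau> *\<^sub>R (transpose A *v zs j) + \<tau> *\<^sub>R gh (xs j)) \<and>
            zs (Suc j) = bprox (\<lambda>w. ereal \<sigma> * conjugate g w) phid gphid (zs j)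
                             (- (\<sigma> *\<^sub>R (A *v (2 *\<^sub>R xs (Suc j) - xs j))))"
    show ?thesis
      by (rule exI[of _ "\<lambda>j. transpose A *v zs j + gh (xs j)"],
          rule exI[of _ "\<lambda>j. - (A *v (2 *\<^sub>R xs (Suc j) - xs j))"], rule exI[of _ 1])
         (use H in \<open>simp add: scaleR_right_distrib cr_def cq_def cross_primal[simplified]\<close>)
  next
    assume H: "\<forall>j. zs (Suc j) = bprox (\<lambda>w. ereal \<sigma> * conjugate g w) phid gphid (zs j)
                             (- (\<sigma> *\<^sub>R (A *v xs j))) \<and>
            xs (Suc j) = bprox (\<lambda>y. ereal \<tau> * f y) phip gphip (xs j)
                             (\<tau> *\<^sub>R (transpose A *v (2 *\<^sub>R zs (Suc j) - zs j)) + \<tau> *\<^sub>R gh (xs j))"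
    show ?thesis
      by (rule exI[of _ "\<lambda>j. transpose A *v (2 *\<^sub>R zs (Suc j) - zs j) + gh (xs j)"],
          rule exI[of _ "\<lambda>j. - (A *v xs j)"], rule exI[of _ "-1"])
         (use H in \<open>simp add: scaleR_right_distrib cr_def cq_def cross_dual[simplified]\<close>)
  qed
  then obtain ax az s where sv: "s = 1 \<or> s = (-1::real)" and
     axz: "\<And>j. xs (Suc j) = bprox (\<lambda>y. ereal \<tau> * f y) phip gphip (xs j) (\<tau> *\<^sub>R ax j)"
     "\<And>j. zs (Suc j) = bprox (\<lambda>w. ereal \<sigma> * conjugate g w) phid gphid (zs j) (\<sigma> *\<^sub>R az j)"
     and crq: "\<And>j. cr (ax j) (az j) (xs (Suc j)) (xs j) (zs (Suc j)) = s * cq (xs (Suc j)) (xs j) (zs (Suc j)) (zs j)"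
    by blast
  have ints: "xs j \<in> interior (edom phip) \<and> zs j \<in> interior (edom phid)" for j
  proof (induction j)
    case 0 then show ?case using init by blast
  next
    case (Suc j)
    then show ?case using bprox_prop[OF proxp] bprox_prop[OF proxd] axz by metis
  qed
  have amin_x: "xs (Suc j) \<in> prox_argmin (\<lambda>y. ereal \<tau> * f y) phip gphip (xs j) (\<tau> *\<^sub>R ax j)" for j
    using bprox_prop[OF proxp] ints axz by metis
  have amin_z: "zs (Suc j) \<in> prox_argmin (\<lambda>w. ereal \<sigma> * conjugate g w) phid gphid (zs j) (\<sigma> *\<^sub>R az j)" for j
    using bprox_prop[OF proxd] ints axz by metis
  have xs_phip: "xs j \<in> edom phip" for j using ints interior_subset by blast
  have zs_phid: "zs j \<in> edom phid" for j using ints interior_subset by blast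
  have fx: "f (xs (Suc j)) = ereal (fr (xs (Suc j)))" for j
    using fin_f[OF prox_fin[OF amin_x xs_phip x_phip x_f pos(2)] xs_phip] .
  have Gz: "conjugate g (zs (Suc j)) = ereal (Gr (zs (Suc j)))" for j
    using fin_G[OF prox_fin[OF amin_z zs_phid z_phid z_G pos(1)]] .
  have fx0: "f x = ereal (fr x)" using fin_f[OF x_f x_phip] .
  have Gz0: "conjugate g z = ereal (Gr z)" using fin_G[OF z_G] .
  have tp: "fr (xs (Suc j)) + ax j \<bullet> xs (Suc j) + (dp (xs (Suc j)) (xs j) + dp x (xs (Suc j))) / \<tau>
         \<le> fr x + ax j \<bullet> x + dp x (xs j) / \<tau>" for j
    unfolding dp_def
    by (rule three_point_scaled[OF kp pos(2) f_cc(2) _ amin_x x_phip fx0 fx]) (use ints in blast)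
  have td: "Gr (zs (Suc j)) + az j \<bullet> zs (Suc j) + (dd (zs (Suc j)) (zs j) + dd z (zs (Suc j))) / \<sigma>
         \<le> Gr z + az j \<bullet> z + dd z (zs j) / \<sigma>" for j
    unfolding dd_def
    by (rule three_point_scaled[OF kd pos(1) Gconv _ amin_z z_phid Gz0 Gz]) (use ints in blast)
  have sm: "hr (xs (Suc j)) - hr (xs j) - gh (xs j) \<bullet> (xs (Suc j) - xs j) \<le> L * dp (xs (Suc j)) (xs j)" for j
    using rel_smooth xs_phip ints unfolding hr_def dp_def by blast
  have gi: "gh (xs j) \<bullet> (x - xs j) \<le> hr x - hr (xs j)" for j
  proof -
    have "xs j \<in> edom h" using xs_phip dom_sub by blast
    then have d: "((\<lambda>u. real_of_ereal (h u)) has_derivative (\<lambda>v. gh (xs j) \<bullet> v)) (at (xs j))"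
      using h_diff by blast
    show ?thesis by (rule grad_ineq[OF h_cc(2) hfin d hdom[OF xs_phip] hdom[OF x_phip]])
  qed
  have sM: "\<sigma> * M\<^sup>2 \<le> 1 / \<tau> - L"
  proof -
    have "\<tau> * (\<sigma> * M\<^sup>2) \<le> \<tau> * (1 / \<tau> - L)" using step pos unfolding M_def
      by (simp add: algebra_simps)
    then show ?thesis using pos by simp
  qed
  have sM': "\<sigma> * M\<^sup>2 \<le> 1 / \<tau>" using sM L_pos by linarith
  have bb: "\<bar>(zs (Suc j) - zs j) \<bullet> (A *v (xs (Suc j) - xs j))\<bar>
            \<le> dd (zs (Suc j)) (zs j) / \<sigma> + (1 / \<tau> - L) * dp (xs (Suc j)) (xs j)" for j
    by (rule bil_bound[OF norms pos(1)]) (use sM sc_p sc_d ints xs_phip zs_phid in \<open>auto simp: M_def dp_def dd_def\<close>)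
  define P where "P = (\<lambda>j. (zs j - z) \<bullet> (A *v (xs j - x)))"
  define D where "D = (\<lambda>j. dp x (xs j) / \<tau> + dd z (zs j) / \<sigma>)"
  have pb: "\<bar>P j\<bar> \<le> D j" for j
  proof -
    have "\<bar>P j\<bar> \<le> dd z (zs j) / \<sigma> + 1 / \<tau> * dp x (xs j)"
      unfolding P_def
      by (rule bil_bound[OF norms pos(1)])
         (use sM' sc_p sc_d ints x_phip z_phid isn_sym[OF norms(1)] isn_sym[OF norms(2)] in \<open>auto simp: M_def dp_def dd_def\<close>)
    then show ?thesis unfolding D_def by simp
  qed
  define gap where "gap = (\<lambda>i. fr (xs i) + hr (xs i) + z \<bullet> (A *v xs i) - Gr z
      - (fr x + hr x + zs i \<bullet> (A *v x) - Gr (zs i)))"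
  have gstep: "gap (Suc j) \<le> D j - D (Suc j) + s * (P (Suc j) - P j)" for j
  proof -
    let ?X = "xs (Suc j)" and ?Y = "xs j" and ?Z = "zs (Suc j)" and ?W = "zs j"
    have c1: "cr (ax j) (az j) ?X ?Y ?Z = ax j \<bullet> x - ax j \<bullet> ?X + (az j \<bullet> z - az j \<bullet> ?Z)
       + (gh ?Y \<bullet> ?X - gh ?Y \<bullet> x) + z \<bullet> (A *v ?X) - ?Z \<bullet> (A *v x)"
      unfolding cr_def by (simp add: inner_diff_right)
    have c2: "cq ?X ?Y ?Z ?W = P (Suc j) - P j + (?Z - ?W) \<bullet> (A *v (?X - ?Y))"
      unfolding cq_def P_def by simp
    have c3: "s * ((?Z - ?W) \<bullet> (A *v (?X - ?Y))) \<le> \<bar>(?Z - ?W) \<bullet> (A *v (?X - ?Y))\<bar>"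
      using sv by auto
    have c4: "gh ?Y \<bullet> (?X - ?Y) = gh ?Y \<bullet> ?X - gh ?Y \<bullet> ?Y"
      "gh ?Y \<bullet> (x - ?Y) = gh ?Y \<bullet> x - gh ?Y \<bullet> ?Y" by (simp_all add: inner_diff_right)
    have c5: "(1 / \<tau> - L) * dp ?X ?Y = dp ?X ?Y / \<tau> - L * dp ?X ?Y" by (simp add: algebra_simps)
    have c6: "(dp ?X ?Y + dp x ?X) / \<tau> = dp ?X ?Y / \<tau> + dp x ?X / \<tau>"
      "(dd ?Z ?W + dd z ?Z) / \<sigma> = dd ?Z ?W / \<sigma> + dd z ?Z / \<sigma>" by (simp_all add: add_divide_distrib)
    have c7: "s * cq ?X ?Y ?Z ?W = s * (P (Suc j) - P j) + s * ((?Z - ?W) \<bullet> (A *v (?X - ?Y)))"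
      unfolding c2 by (simp add: algebra_simps)
    have tp': "fr ?X + ax j \<bullet> ?X + dp ?X ?Y / \<tau> + dp x ?X / \<tau> \<le> fr x + ax j \<bullet> x + dp x ?Y / \<tau>"
      using tp[of j] unfolding c6 by linarith
    have td': "Gr ?Z + az j \<bullet> ?Z + dd ?Z ?W / \<sigma> + dd z ?Z / \<sigma> \<le> Gr z + az j \<bullet> z + dd z ?W / \<sigma>"
      using td[of j] unfolding c6 by linarith
    have bb': "\<bar>(?Z - ?W) \<bullet> (A *v (?X - ?Y))\<bar> \<le> dd ?Z ?W / \<sigma> + (dp ?X ?Y / \<tau> - L * dp ?X ?Y)"
      using bb[of j] unfolding c5 .
    show ?thesis
      unfolding gap_def D_def
      using tp' td' sm[of j] gi[of j] bb' crq[of j] c1 c3 c4 c7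
      by linarith
  qed
  have gsum: "(\<Sum>i=1..n. gap i) \<le> D 0 - D n + s * (P n - P 0)" for n
  proof (induction n)
    case 0 then show ?case by simp
  next
    case (Suc n)
    have "(\<Sum>i=1..Suc n. gap i) = (\<Sum>i=1..n. gap i) + gap (Suc n)" by simp
    then show ?case using Suc gstep[of n] by (simp add: algebra_simps)
  qed
  have gsum2: "(\<Sum>i=1..k. gap i) \<le> 2 * D 0"
  proof -
    have "s * (P k - P 0) \<le> \<bar>P k\<bar> + \<bar>P 0\<bar>" using sv by auto
    then show ?thesis using gsum[of k] pb[of k] pb[of 0] by linarith
  qed
  have kpos: "real k > 0" using k1 by simp
  define xa where "xa = (1 / real k) *\<^sub>R (\<Sum>i=1..k. xs i)"
  define za where "za = (1 / real k) *\<^sub>R (\<Sum>i=1..k. zs i)"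
  have wsum: "(\<Sum>i\<in>{1..k}. 1 / real k) = 1" using kpos by simp
  have xa_eq: "xa = (\<Sum>i\<in>{1..k}. (1 / real k) *\<^sub>R xs i)" unfolding xa_def by (simp add: scaleR_sum_right)
  have za_eq: "za = (\<Sum>i\<in>{1..k}. (1 / real k) *\<^sub>R zs i)" unfolding za_def by (simp add: scaleR_sum_right)
  have iS: "i \<in> {1..k} \<Longrightarrow> i = Suc (i - 1)" for i by auto
  have fxi: "i \<in> {1..k} \<Longrightarrow> f (xs i) \<le> ereal (fr (xs i))" for i using fx[of "i - 1"] iS[of i] by (metis order_refl)
  have hxi: "h (xs i) \<le> ereal (hr (xs i))" for i using hdom[OF xs_phip] by simp
  have Gzi: "i \<in> {1..k} \<Longrightarrow> conjugate g (zs i) \<le> ereal (Gr (zs i))" for i using Gz[of "i - 1"] iS[of i] by (metis order_refl)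
  have fJ: "f xa \<le> ereal (\<Sum>i\<in>{1..k}. 1 / real k * fr (xs i))"
    unfolding xa_eq by (rule jensen_fun[OF f_cc(2)]) (use wsum fxi in auto)
  have hJ: "h xa \<le> ereal (\<Sum>i\<in>{1..k}. 1 / real k * hr (xs i))"
    unfolding xa_eq by (rule jensen_fun[OF h_cc(2)]) (use wsum hxi in auto)
  have GJ: "conjugate g za \<le> ereal (\<Sum>i\<in>{1..k}. 1 / real k * Gr (zs i))"
    unfolding za_eq by (rule jensen_fun[OF Gconv]) (use wsum Gzi in auto)
  have "h xa < \<infinity>" by (rule le_less_trans[OF hJ]) simp
  then have "xa \<in> edom h" unfolding edom_def by simp
  then have hxa: "h xa = ereal (hr xa)" using hfin \<open>h xa < \<infinity>\<close> unfolding hr_def by (cases "h xa") auto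
  have "f xa < \<infinity>" by (rule le_less_trans[OF fJ]) simp
  moreover have "f xa \<noteq> -\<infinity>"
  proof
    assume "f xa = -\<infinity>"
    moreover have "f xa + h xa \<noteq> -\<infinity>" using fh_proper unfolding proper_fun_def by blast
    ultimately show False using hxa by simp
  qed
  ultimately have fxa: "f xa = ereal (fr xa)" unfolding fr_def by (cases "f xa") auto
  have "conjugate g za < \<infinity>" by (rule le_less_trans[OF GJ]) simp
  then have Gza: "conjugate g za = ereal (Gr za)" using fin_G by blast
  have hx: "h x = ereal (hr x)" using hdom[OF x_phip] .
  have frxa: "fr xa \<le> (\<Sum>i\<in>{1..k}. 1 / real k * fr (xs i))" using fJ fxa by simp
  have hrxa: "hr xa \<le> (\<Sum>i\<in>{1..k}. 1 / real k * hr (xs i))" using hJ hxa by simp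
  have Grza: "Gr za \<le> (\<Sum>i\<in>{1..k}. 1 / real k * Gr (zs i))" using GJ Gza by simp
  have lin1: "z \<bullet> (A *v xa) = (\<Sum>i\<in>{1..k}. 1 / real k * (z \<bullet> (A *v xs i)))"
    unfolding xa_eq by (simp add: matrix_vector_mult_scaleR inner_sum_right
        linear_sum[OF matrix_vector_mul_linear])
  have lin2: "za \<bullet> (A *v x) = (\<Sum>i\<in>{1..k}. 1 / real k * (zs i \<bullet> (A *v x)))"
    unfolding za_eq by (simp add: inner_sum_left)
  have avg: "(\<Sum>i\<in>{1..k}. 1 / real k * gap i) \<le> 2 / real k * D 0"
  proof -
    have "(\<Sum>i\<in>{1..k}. 1 / real k * gap i) = 1 / real k * (\<Sum>i=1..k. gap i)"
      by (simp add: sum_distrib_left)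
    also have "\<dots> \<le> 1 / real k * (2 * D 0)" using gsum2 kpos by (intro mult_left_mono) auto
    finally show ?thesis by simp
  qed
  have gap_split: "(\<Sum>i\<in>{1..k}. 1 / real k * gap i) =
      (\<Sum>i\<in>{1..k}. 1 / real k * fr (xs i)) + (\<Sum>i\<in>{1..k}. 1 / real k * hr (xs i))
      + (\<Sum>i\<in>{1..k}. 1 / real k * (z \<bullet> (A *v xs i))) - Gr z - (fr x + hr x)
      - (\<Sum>i\<in>{1..k}. 1 / real k * (zs i \<bullet> (A *v x))) + (\<Sum>i\<in>{1..k}. 1 / real k * Gr (zs i))"
  proof -
    have c: "(\<Sum>i\<in>{1..k}. 1 / real k * c) = c" for c using kpos by simp
    have "(\<Sum>i\<in>{1..k}. 1 / real k * gap i) =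
      (\<Sum>i\<in>{1..k}. 1 / real k * fr (xs i)) + (\<Sum>i\<in>{1..k}. 1 / real k * hr (xs i))
      + (\<Sum>i\<in>{1..k}. 1 / real k * (z \<bullet> (A *v xs i))) - (\<Sum>i\<in>{1..k}. 1 / real k * Gr z)
      - (\<Sum>i\<in>{1..k}. 1 / real k * (fr x + hr x))
      - (\<Sum>i\<in>{1..k}. 1 / real k * (zs i \<bullet> (A *v x))) + (\<Sum>i\<in>{1..k}. 1 / real k * Gr (zs i))"
      unfolding gap_def by (simp add: sum.distrib sum_subtractf algebra_simps)
    then show ?thesis unfolding c .
  qed
  have real_ineq: "fr xa + hr xa + z \<bullet> (A *v xa) - Gr z - (fr x + hr x + za \<bullet> (A *v x) - Gr za)
      \<le> 2 / real k * (1 / \<tau> * dp x (xs 0) + 1 / \<sigma> * dd z (zs 0))"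
  proof -
    have "2 / real k * D 0 = 2 / real k * (1 / \<tau> * dp x (xs 0) + 1 / \<sigma> * dd z (zs 0))"
      unfolding D_def by simp
    then show ?thesis using avg gap_split frxa hrxa Grza lin1 lin2 by linarith
  qed
  have fx_eq: "f x = ereal (fr x)" by (rule fx0)
  have L1: "lagrangian f h g A xa z = ereal (fr xa + hr xa + z \<bullet> (A *v xa) - Gr z)"
    unfolding lagrangian_def edom_def using fxa hxa Gz0 by simp
  have L2: "lagrangian f h g A x za = ereal (fr x + hr x + za \<bullet> (A *v x) - Gr za)"
    unfolding lagrangian_def edom_def using fx_eq hx Gza by simp
  show ?thesis
    unfolding xa_def[symmetric] za_def[symmetric] L1 L2 using real_ineq
    by (simp add: dp_def dd_def)
qed

end
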